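(* Let $(X,d_X)$ be a metric space, $\gamma\ge1$ and $d$ a positive integer with $\gamma_d(X)<\gamma<\infty$. Then for every $k\in\mathbb Z$, $X$ admits a $2^k$-bounded $\big(\frac1{100\gamma d^2},\frac1{d+1}\big)$-padded stochastic decomposition.
   Context: $X$ has Nagata dimension at most $d$ with constant $\gamma$ if for every $s>0$ there is a family $\mathscr C$ of nonempty subsets of $X$ covering $X$, with $\mathrm{diam}(C)\le\gamma s$ for all $C\in\mathscr C$, such that every $A\subseteq X$ with $\mathrm{diam}(A)\le s$ meets at most $d+1$ members of $\mathscr C$. $\gamma_d(X)$ is the infimum of such $\gamma$ ($\infty$ if none). For a partition $\mathscr P$ and $x\in X$, $\mathscr P(x)$ is the part containing $x$. A $\Delta$-bounded stochastic decomposition is a probability distribution over partitions of $X$ such that almost surely all parts have diameter $\le\Delta$; it is $(\varepsilon,\delta)$-padded if $\Pr[\mathscr P(x)\supseteq B_X(x,\varepsilon\Delta)]\ge\delta$ for every $x\in X$ ($B_X$ the closed ball). *)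

theory Defs
  imports "HOL-Probability.Probability"
begin

definition diam_le :: "'a::metric_space set \<Rightarrow> real \<Rightarrow> bool" where
  "diam_le A r \<longleftrightarrow> (\<forall>x\<in>A. \<forall>y\<in>A. dist x y \<le> r)"

definition nagata_dim_le :: "'a::metric_space set \<Rightarrow> nat \<Rightarrow> real \<Rightarrow> bool" where
  "nagata_dim_le X d g \<longleftrightarrow>
     (\<forall>s>0. \<exists>\<C>::'a set set.
        (\<forall>C\<in>\<C>. C \<noteq> {} \<and> C \<subseteq> X \<and> diam_le C (g * s)) \<and> X \<subseteq> \<Union>\<C> \<and>
        (\<forall>A\<subseteq>X. diam_le A s \<longrightarrow>
            finite {C\<in>\<C>. C \<inter> A \<noteq> {}} \<and> card {C\<in>\<C>. C \<inter> A \<noteq> {}} \<le> d + 1))"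

text \<open>gamma_d(X): infimum of admissible constants, \<infinity> if there is none.\<close>
definition nagata_const :: "'a::metric_space set \<Rightarrow> nat \<Rightarrow> ereal" where
  "nagata_const X d = (INF g\<in>{g. nagata_dim_le X d g}. ereal g)"

definition is_partition :: "'a set \<Rightarrow> 'a set set \<Rightarrow> bool" where
  "is_partition X P \<longleftrightarrow> (\<forall>C\<in>P. C \<noteq> {} \<and> C \<subseteq> X) \<and> \<Union>P = X \<and>
     (\<forall>C\<in>P. \<forall>D\<in>P. C \<noteq> D \<longrightarrow> C \<inter> D = {})"

definition part_of :: "'a set set \<Rightarrow> 'a \<Rightarrow> 'a set" where
  "part_of P x = (THE C. C \<in> P \<and> x \<in> C)"

definition stoch_decomp :: "'a::metric_space set \<Rightarrow> 'a set set measure \<Rightarrow> real \<Rightarrow> bool" where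
  "stoch_decomp X M \<Delta> \<longleftrightarrow> prob_space M \<and> (\<forall>P\<in>space M. is_partition X P) \<and>
     (AE P in M. \<forall>C\<in>P. diam_le C \<Delta>)"

definition padded :: "'a::metric_space set \<Rightarrow> 'a set set measure \<Rightarrow> real \<Rightarrow> real \<Rightarrow> real \<Rightarrow> bool" where
  "padded X M \<Delta> \<epsilon> \<delta> \<longleftrightarrow>
     (\<forall>x\<in>X. {P\<in>space M. cball x (\<epsilon> * \<Delta>) \<inter> X \<subseteq> part_of P x} \<in> sets M \<and>
             measure M {P\<in>space M. cball x (\<epsilon> * \<Delta>) \<inter> X \<subseteq> part_of P x} \<ge> \<delta>)"

end

theory Submission
  imports Defs
begin

lemma pigeon_step:
  fixes f :: "nat \<Rightarrow> nat"
  assumes "f 0 \<ge> 1" "f (Suc d) \<le> d + 1" "\<And>i. i \<le> d \<Longrightarrow> f i \<le> f (Suc i)"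
  shows "\<exists>j\<le>d. f j = f (Suc j)"
proof (rule ccontr)
  assume "\<not> ?thesis"
  hence lt: "\<And>j. j \<le> d \<Longrightarrow> f j < f (Suc j)" using assms(3) by (metis le_neq_implies_less)
  have "\<And>i. i \<le> Suc d \<Longrightarrow> f i \<ge> f 0 + i"
  proof -
    fix i show "i \<le> Suc d \<Longrightarrow> f i \<ge> f 0 + i"
    proof (induction i)
      case 0 then show ?case by simp
    next
      case (Suc i) then show ?case using lt[of i] by simp
    qed
  qed
  from this[of "Suc d"] assms(1,2) show False by simp
qed

lemma main_construction:
  fixes X :: "'a::metric_space set" and \<C> :: "'a set set" and d :: nat
  assumes cov: "\<forall>C\<in>\<C>. C \<noteq> {} \<and> C \<subseteq> X \<and> diam_le C D"
    and covX: "X \<subseteq> \<Union>\<C>"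
    and fin: "\<forall>A\<subseteq>X. diam_le A s \<longrightarrow>
            finite {C\<in>\<C>. C \<inter> A \<noteq> {}} \<and> card {C\<in>\<C>. C \<inter> A \<noteq> {}} \<le> d + 1"
    and dpos: "\<delta> > 0"
    and c1: "4 * (real d + 1) * \<delta> \<le> s"
    and c2: "D + 2 * (2 * real d + 1) * \<delta> \<le> \<Delta>"
    and c3: "r \<le> \<delta>"
  shows "\<exists>M :: 'a set set measure. stoch_decomp X M \<Delta> \<and>
     (\<forall>x\<in>X. {P\<in>space M. cball x r \<inter> X \<subseteq> part_of P x} \<in> sets M \<and>
             measure M {P\<in>space M. cball x r \<inter> X \<subseteq> part_of P x} \<ge> 1 / (real d + 1))"
proof -
  define T where "T y t = {C\<in>\<C>. \<exists>c\<in>C. dist y c \<le> t}" for y t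
  define S where "S j y = T y ((2 * real j + 1) * \<delta>)" for j :: nat and y
  define Q where "Q j y = {z\<in>X. S j z = S j y}" for j y
  define P where "P j = Q j ` X" for j
  define Ps where "Ps = P ` {0..d}"
  define M where "M = uniform_count_measure Ps"
  have Tmono: "T y t \<subseteq> T y t'" if "t \<le> t'" for y t t'
    using that unfolding T_def by force
  have Tfin: "finite (T x t) \<and> card (T x t) \<le> d + 1" if "x \<in> X" "2 * t \<le> s" for x t
  proof -
    let ?A = "cball x t \<inter> X"
    have "diam_le ?A s" unfolding diam_le_def
    proof (intro ballI)
      fix a b assume "a \<in> ?A" "b \<in> ?A"
      hence "dist a x \<le> t" "dist x b \<le> t" by (auto simp: dist_commute)
      thus "dist a b \<le> s" using dist_triangle[of a b x] that by linarith
    qed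
    moreover have "{C\<in>\<C>. C \<inter> ?A \<noteq> {}} = T x t"
    proof (intro set_eqI iffI)
      fix C assume "C \<in> {C\<in>\<C>. C \<inter> ?A \<noteq> {}}"
      thus "C \<in> T x t" unfolding T_def by (auto simp: dist_commute)
    next
      fix C assume "C \<in> T x t"
      then obtain c where "C \<in> \<C>" "c \<in> C" "dist x c \<le> t" unfolding T_def by auto
      moreover have "c \<in> X" using cov \<open>C \<in> \<C>\<close> \<open>c \<in> C\<close> by blast
      ultimately show "C \<in> {C\<in>\<C>. C \<inter> ?A \<noteq> {}}" by auto
    qed
    ultimately show ?thesis using fin by auto
  qed
  have Part: "is_partition X (P j)" for j
    unfolding is_partition_def P_def Q_def by auto
  have partof: "part_of (P j) x = Q j x" if "x \<in> X" for j x
    unfolding part_of_def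
  proof (rule the_equality)
    show "Q j x \<in> P j \<and> x \<in> Q j x" using that unfolding P_def Q_def by auto
  next
    fix C assume "C \<in> P j \<and> x \<in> C"
    then obtain y where "y \<in> X" "C = Q j y" "x \<in> Q j y" unfolding P_def by auto
    thus "C = Q j x" unfolding Q_def by auto
  qed
  have Sne: "\<exists>C. C \<in> S j y" if yX: "y \<in> X" for j y
  proof -
    obtain C where "C \<in> \<C>" "y \<in> C" using covX yX by auto
    moreover have "(2 * real j + 1) * \<delta> \<ge> 0" using dpos by simp
    ultimately show ?thesis unfolding S_def T_def by force
  qed
  have diamQ: "diam_le (Q j y) \<Delta>" if "j \<le> d" for j y
    unfolding diam_le_def
  proof (intro ballI)
    fix a b assume a: "a \<in> Q j y" and b: "b \<in> Q j y"
    hence "a \<in> X" "S j a = S j b" unfolding Q_def by auto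
    then obtain C where C: "C \<in> S j a" "C \<in> S j b" using Sne by metis
    then obtain c1 c2 where "c1 \<in> C" "c2 \<in> C" "dist a c1 \<le> (2 * real j + 1) * \<delta>"
      "dist b c2 \<le> (2 * real j + 1) * \<delta>" "C \<in> \<C>" unfolding S_def T_def by auto
    moreover have "dist c1 c2 \<le> D" using cov \<open>C \<in> \<C>\<close> \<open>c1 \<in> C\<close> \<open>c2 \<in> C\<close>
      unfolding diam_le_def by blast
    moreover have "(2 * real j + 1) * \<delta> \<le> (2 * real d + 1) * \<delta>"
      using that dpos by (intro mult_right_mono) auto
    moreover have "dist a b \<le> dist a c1 + dist c1 c2 + dist b c2"
      using dist_triangle[of a b c1] dist_triangle[of c1 b c2] by (simp add: dist_commute)
    ultimately show "dist a b \<le> \<Delta>" using c2 by (simp add: algebra_simps)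
  qed
  have good: "\<exists>j\<le>d. cball x r \<inter> X \<subseteq> Q j x" if x: "x \<in> X" for x
  proof -
    define f where "f i = card (T x (2 * real i * \<delta>))" for i
    have fin_i: "finite (T x (2 * real i * \<delta>)) \<and> card (T x (2 * real i * \<delta>)) \<le> d + 1"
      if "i \<le> Suc d" for i
    proof -
      have "2 * (2 * real i * \<delta>) \<le> 4 * (real d + 1) * \<delta>"
        using that dpos by (simp add: mult_right_mono)
      thus ?thesis using Tfin[OF x] c1 by auto
    qed
    have "\<exists>j\<le>d. f j = f (Suc j)"
    proof (rule pigeon_step)
      obtain C where "C \<in> \<C>" "x \<in> C" using covX x by auto
      hence "C \<in> T x (2 * real 0 * \<delta>)" unfolding T_def by force
      thus "f 0 \<ge> 1" using fin_i[of 0] unfolding f_def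
        by (metis One_nat_def Suc_leI card_gt_0_iff empty_iff zero_le)
      show "f (Suc d) \<le> d + 1" using fin_i[of "Suc d"] unfolding f_def by simp
      fix i assume "i \<le> d"
      thus "f i \<le> f (Suc i)" unfolding f_def using fin_i[of "Suc i"] Tmono dpos
        by (intro card_mono) auto
    qed
    then obtain j where j: "j \<le> d" "f j = f (Suc j)" by auto
    let ?L = "T x (2 * real j * \<delta>)" and ?U = "T x (2 * real (Suc j) * \<delta>)"
    have LU: "?L \<subseteq> ?U" using Tmono dpos by auto
    have eqLU: "?L = ?U" using card_subset_eq[OF _ LU] fin_i[of "Suc j"] j unfolding f_def by auto
    have "cball x r \<inter> X \<subseteq> Q j x"
    proof
      fix y assume y: "y \<in> cball x r \<inter> X"
      hence dxy: "dist x y \<le> \<delta>" using c3 by auto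
      have "S j y = ?L" if "y \<in> X" "dist x y \<le> \<delta>" for y
      proof
        show "S j y \<subseteq> ?L"
        proof
          fix C assume "C \<in> S j y"
          then obtain c where "C \<in> \<C>" "c \<in> C" "dist y c \<le> (2 * real j + 1) * \<delta>"
            unfolding S_def T_def by auto
          moreover have "dist x c \<le> dist x y + dist y c" by (rule dist_triangle)
          ultimately have "dist x c \<le> 2 * real (Suc j) * \<delta>" using that by (simp add: algebra_simps)
          hence "C \<in> ?U" unfolding T_def using \<open>C \<in> \<C>\<close> \<open>c \<in> C\<close> by auto
          thus "C \<in> ?L" using eqLU by simp
        qed
        show "?L \<subseteq> S j y"
        proof
          fix C assume "C \<in> ?L"
          then obtain c where "C \<in> \<C>" "c \<in> C" "dist x c \<le> 2 * real j * \<delta>"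
            unfolding T_def by auto
          moreover have "dist y c \<le> dist y x + dist x c" by (rule dist_triangle)
          ultimately have "dist y c \<le> (2 * real j + 1) * \<delta>" using that
            by (simp add: algebra_simps dist_commute)
          thus "C \<in> S j y" unfolding S_def T_def using \<open>C \<in> \<C>\<close> \<open>c \<in> C\<close> by auto
        qed
      qed
      note Sy = this
      have "S j y = S j x" using Sy[of y] Sy[of x] y dxy x dpos by simp
      thus "y \<in> Q j x" using y unfolding Q_def by simp
    qed
    thus ?thesis using j by auto
  qed
  have finPs: "finite Ps" "Ps \<noteq> {}" unfolding Ps_def by auto
  have cardPs: "card Ps \<le> d + 1" unfolding Ps_def
    using card_image_le[of "{0..d}" P] by simp
  have sp: "space M = Ps" "sets M = Pow Ps"
    unfolding M_def by (simp_all add: space_uniform_count_measure sets_uniform_count_measure)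
  have "stoch_decomp X M \<Delta>"
    unfolding stoch_decomp_def
  proof (intro conjI)
    show "prob_space M" unfolding M_def using finPs by (rule prob_space_uniform_count_measure)
    show "\<forall>P\<in>space M. is_partition X P" using sp Part unfolding Ps_def by auto
    have "\<forall>Pa\<in>space M. \<forall>C\<in>Pa. diam_le C \<Delta>" using sp diamQ unfolding Ps_def P_def by auto
    thus "AE P in M. \<forall>C\<in>P. diam_le C \<Delta>" by (intro AE_I2) blast
  qed
  moreover have "\<forall>x\<in>X. {Pa\<in>space M. cball x r \<inter> X \<subseteq> part_of Pa x} \<in> sets M \<and>
             measure M {Pa\<in>space M. cball x r \<inter> X \<subseteq> part_of Pa x} \<ge> 1 / (real d + 1)"
  proof
    fix x assume x: "x \<in> X"
    let ?E = "{Pa\<in>space M. cball x r \<inter> X \<subseteq> part_of Pa x}"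
    have sub: "?E \<subseteq> Ps" using sp by auto
    show "?E \<in> sets M \<and> measure M ?E \<ge> 1 / (real d + 1)"
    proof
      show "?E \<in> sets M" using sp sub by auto
      obtain j where j: "j \<le> d" "cball x r \<inter> X \<subseteq> Q j x" using good[OF x] by auto
      have "P j \<in> ?E" using j sp partof[OF x] unfolding Ps_def by auto
      hence "card ?E \<ge> 1" using finite_subset[OF sub finPs(1)]
        by (metis One_nat_def Suc_leI card_gt_0_iff empty_iff)
      have m: "measure M ?E = card ?E / card Ps"
        unfolding M_def using finPs sub by (simp add: measure_uniform_count_measure M_def sp)
      have cp: "card Ps > 0" using finPs by (simp add: card_gt_0_iff)
      have "1 / (real d + 1) \<le> 1 / real (card Ps)"
        using cardPs cp by (intro divide_left_mono) auto
      also have "\<dots> \<le> card ?E / card Ps" using \<open>card ?E \<ge> 1\<close> cp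
        by (intro divide_right_mono) auto
      finally show "measure M ?E \<ge> 1 / (real d + 1)" using m by simp
    qed
  qed
  ultimately show ?thesis by blast
qed

lemma aux1: "1 \<le> (x::real) \<Longrightarrow> x \<le> y \<Longrightarrow> 4 * (x + 1) \<le> 1/2 * (100 * y)"
  by simp

lemma aux2: "1 \<le> (x::real) \<Longrightarrow> x \<le> y \<Longrightarrow> 100 * y \<le> z \<Longrightarrow> 2 * (2 * x + 1) \<le> 1/2 * z"
  by simp

theorem lemma5p2:
  fixes X :: "'a::metric_space set" and d :: nat and \<gamma> :: real
  assumes "\<gamma> \<ge> 1" and "d \<ge> 1" and "nagata_const X d < ereal \<gamma>"
  shows "\<forall>k::int. \<exists>M :: 'a set set measure.
           stoch_decomp X M (2 powr k) \<and>
           padded X M (2 powr k) (1 / (100 * \<gamma> * (real d)^2)) (1 / (real d + 1))"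
proof
  fix k :: int
  obtain g where g: "nagata_dim_le X d g" "g < \<gamma>"
    using assms(3) unfolding nagata_const_def by (auto simp: INF_less_iff)
  define \<Delta> :: real where "\<Delta> = 2 powr k"
  have Dp: "\<Delta> > 0" unfolding \<Delta>_def by simp
  define s where "s = \<Delta> / (2 * \<gamma>)"
  have sp: "s > 0" using Dp assms(1) unfolding s_def by simp
  define \<delta> where "\<delta> = 1 / (100 * \<gamma> * (real d)^2) * \<Delta>"
  have d1: "real d \<ge> 1" using assms(2) by simp
  have dp: "\<delta> > 0" unfolding \<delta>_def using Dp assms(1,2) by simp
  obtain \<C> :: "'a set set" where C: "\<forall>C\<in>\<C>. C \<noteq> {} \<and> C \<subseteq> X \<and> diam_le C (g * s)"
    "X \<subseteq> \<Union>\<C>" "\<forall>A\<subseteq>X. diam_le A s \<longrightarrow>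
            finite {C\<in>\<C>. C \<inter> A \<noteq> {}} \<and> card {C\<in>\<C>. C \<inter> A \<noteq> {}} \<le> d + 1"
    using g(1)[unfolded nagata_dim_le_def, rule_format, OF sp] by (elim exE conjE) blast
  have gs: "g * s \<le> \<Delta> / 2"
  proof -
    have "g * s \<le> \<gamma> * s" using g(2) sp by simp
    also have "\<dots> = \<Delta> / 2" unfolding s_def using assms(1) by simp
    finally show ?thesis .
  qed
  have dd: "real d \<le> (real d)^2" using d1 by (simp add: power2_eq_square)
  have c1: "4 * (real d + 1) * \<delta> \<le> s"
  proof -
    have "4 * (real d + 1) * \<delta> = \<Delta> / \<gamma> * (4 * (real d + 1) / (100 * (real d)^2))"
      unfolding \<delta>_def using assms(1) d1 by (simp add: field_simps)
    also have "\<dots> \<le> \<Delta> / \<gamma> * (1/2)"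
    proof (intro mult_left_mono)
      have pos: "0 < 100 * (real d)\<^sup>2" using d1 by simp
      have "4 * (real d + 1) \<le> 1/2 * (100 * (real d)\<^sup>2)" using aux1[OF d1 dd] .
      thus "4 * (real d + 1) / (100 * (real d)\<^sup>2) \<le> 1/2"
        by (subst pos_divide_le_eq[OF pos])
      show "0 \<le> \<Delta> / \<gamma>" using Dp assms(1) by simp
    qed
    also have "\<dots> = s" unfolding s_def by simp
    finally show ?thesis .
  qed
  have c2: "g * s + 2 * (2 * real d + 1) * \<delta> \<le> \<Delta>"
  proof -
    have "2 * (2 * real d + 1) * \<delta> = \<Delta> * (2 * (2 * real d + 1) / (100 * \<gamma> * (real d)^2))"
      unfolding \<delta>_def using assms(1) d1 by (simp add: field_simps)
    also have "\<dots> \<le> \<Delta> * (1/2)"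
    proof (intro mult_left_mono)
      have g1: "100 * (real d)^2 \<le> 100 * \<gamma> * (real d)^2"
        using mult_right_mono[OF assms(1), of "100 * (real d)^2"] by (simp add: mult_ac)
      have pos: "0 < 100 * \<gamma> * (real d)\<^sup>2" using d1 assms(1) by simp
      have "2 * (2 * real d + 1) \<le> 1/2 * (100 * \<gamma> * (real d)\<^sup>2)" using aux2[OF d1 dd g1] .
      thus "2 * (2 * real d + 1) / (100 * \<gamma> * (real d)\<^sup>2) \<le> 1/2"
        by (subst pos_divide_le_eq[OF pos])
      show "0 \<le> \<Delta>" using Dp by simp
    qed
    finally show ?thesis using gs by simp
  qed
  obtain M :: "'a set set measure" where M: "stoch_decomp X M \<Delta>"
    "\<forall>x\<in>X. {P\<in>space M. cball x \<delta> \<inter> X \<subseteq> part_of P x} \<in> sets M \<and>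
             measure M {P\<in>space M. cball x \<delta> \<inter> X \<subseteq> part_of P x} \<ge> 1 / (real d + 1)"
    using main_construction[OF C dp c1 c2 order_refl] by blast
  show "\<exists>M :: 'a set set measure.
           stoch_decomp X M (2 powr k) \<and>
           padded X M (2 powr k) (1 / (100 * \<gamma> * (real d)^2)) (1 / (real d + 1))"
    using M unfolding padded_def \<Delta>_def \<delta>_def by blast
qed

end
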